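(* Any set of reflections of $G_7$ containing at least one element of each of $R'=R_1\cup R_1^{-1}$, $R''=R_2\cup R_2^{-1}$ and $S$ generates the entire group $G_7$.
   Context: Let $G_7$ be the subgroup of $GL_2(\mathbb{C})$ generated by $s=\begin{bmatrix}1&0\\0&-1\end{bmatrix}$, $t=\frac14\begin{bmatrix}(1+\sqrt3)+(-1+\sqrt3)i & (1+\sqrt3)+(-1+\sqrt3)i\\ (-1+\sqrt3)-(1+\sqrt3)i & (1-\sqrt3)+(1+\sqrt3)i\end{bmatrix}$ and $u=t^{\top}$ (presentation $\langle s,t,u\mid s^2=t^3=u^3=1,\ stu=ust=tus\rangle$, order $144$). A reflection is a linear map of $\mathbb{C}^2$ whose fixed space has dimension $1$. $G_7$ has $22$ reflections in five conjugacy classes: $S$ (class of $s$, six reflections of order $2$), $R_1$ (class of $t$), $R_2$ (class of $u$), $R_1^{-1}=\{r^{-1}:r\in R_1\}$ and $R_2^{-1}=\{r^{-1}:r\in R_2\}$, the last four each consisting of four reflections of order $3$. *)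

theory Defs
  imports "HOL-Analysis.Analysis"
begin

type_synonym cmat2 = "complex^2^2"

definition mat2 :: "complex \<Rightarrow> complex \<Rightarrow> complex \<Rightarrow> complex \<Rightarrow> cmat2" where
  "mat2 a b c d = (\<chi> i j. if i = (1::2) then (if j = (1::2) then a else b)
                            else (if j = (1::2) then c else d))"

definition gen_group :: "cmat2 set \<Rightarrow> cmat2 set" where
  "gen_group X = \<Inter>{H. X \<subseteq> H \<and> mat 1 \<in> H \<and> (\<forall>a\<in>H. \<forall>b\<in>H. a ** b \<in> H)
       \<and> (\<forall>a\<in>H. \<exists>b\<in>H. a ** b = mat 1 \<and> b ** a = mat 1)}"

definition s7 :: cmat2 where
  "s7 = mat2 1 0 0 (-1)"

definition t7 :: cmat2 where
  "t7 = mat2 ((1/4) * (Complex (1 + sqrt 3) (-1 + sqrt 3)))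
             ((1/4) * (Complex (1 + sqrt 3) (-1 + sqrt 3)))
             ((1/4) * (Complex (-1 + sqrt 3) (-(1 + sqrt 3))))
             ((1/4) * (Complex (1 - sqrt 3) (1 + sqrt 3)))"

definition u7 :: cmat2 where
  "u7 = transpose t7"

definition G7 :: "cmat2 set" where
  "G7 = gen_group {s7, t7, u7}"

definition is_reflection :: "cmat2 \<Rightarrow> bool" where
  "is_reflection A \<longleftrightarrow> vec.dim {v :: complex^2. A *v v = v} = 1"

definition reflections7 :: "cmat2 set" where
  "reflections7 = {r \<in> G7. is_reflection r}"

definition conj_class7 :: "cmat2 \<Rightarrow> cmat2 set" where
  "conj_class7 x = {g ** x ** h | g h. g \<in> G7 \<and> h \<in> G7 \<and> g ** h = mat 1}"

definition inv_set :: "cmat2 set \<Rightarrow> cmat2 set" where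
  "inv_set R = {r'. \<exists>r\<in>R. r ** r' = mat 1 \<and> r' ** r = mat 1}"

definition S7 :: "cmat2 set" where "S7 = conj_class7 s7"
definition R1 :: "cmat2 set" where "R1 = conj_class7 t7"
definition R2 :: "cmat2 set" where "R2 = conj_class7 u7"

end

theory Submission
  imports Defs
begin

section \<open>Exact arithmetic in Q(sqrt 3, i) via integer coordinates\<close>

type_synonym q4 = "int \<times> int \<times> int \<times> int"
type_synonym qmat = "q4 \<times> q4 \<times> q4 \<times> q4"

fun qmul :: "q4 \<Rightarrow> q4 \<Rightarrow> q4" where
 "qmul (a,b,c,d) (e,f,g,h) = (a*e+3*b*f - (c*g+3*d*h), a*f+b*e - (c*h+d*g),
     a*g+3*b*h + c*e+3*d*f, a*h+b*g+c*f+d*e)"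
fun qadd :: "q4 \<Rightarrow> q4 \<Rightarrow> q4" where
 "qadd (a,b,c,d) (e,f,g,h) = (a+e,b+f,c+g,d+h)"
fun qsc :: "int \<Rightarrow> q4 \<Rightarrow> q4" where
 "qsc k (a,b,c,d) = (k*a,k*b,k*c,k*d)"
fun emb :: "q4 \<Rightarrow> complex" where
 "emb (a,b,c,d) = Complex (of_int a + of_int b * sqrt 3) (of_int c + of_int d * sqrt 3)"

lemma emb_add: "emb (qadd x y) = emb x + emb y"
  by (cases x; cases y) (simp add: algebra_simps complex_eq_iff)

lemma emb_sc: "emb (qsc k x) = of_int k * emb x"
  by (cases x) (simp add: algebra_simps complex_eq_iff)

lemma emb_mul: "emb (qmul x y) = emb x * emb y"
proof -
  obtain a b c d where x: "x = (a,b,c,d)" by (cases x) auto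
  obtain e f g h where y: "y = (e,f,g,h)" by (cases y) auto
  have s3: "sqrt 3 * sqrt 3 = (3::real)" by simp
  show ?thesis unfolding x y
    by (simp add: complex_eq_iff algebra_simps s3)
qed

fun mmul :: "qmat \<Rightarrow> qmat \<Rightarrow> qmat" where
 "mmul (a,b,c,d) (e,f,g,h) = (qadd (qmul a e) (qmul b g), qadd (qmul a f) (qmul b h),
     qadd (qmul c e) (qmul d g), qadd (qmul c f) (qmul d h))"

fun scal :: "int \<Rightarrow> qmat \<Rightarrow> qmat" where
 "scal k (a,b,c,d) = (qsc k a, qsc k b, qsc k c, qsc k d)"

fun embs :: "nat \<Rightarrow> qmat \<Rightarrow> cmat2" where
 "embs n (a,b,c,d) = mat2 (emb a / 4^n) (emb b / 4^n) (emb c / 4^n) (emb d / 4^n)"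

lemma mat2_mul: "mat2 a b c d ** mat2 e f g h = mat2 (a*e+b*g) (a*f+b*h) (c*e+d*g) (c*f+d*h)"
  by (simp add: mat2_def matrix_matrix_mult_def vec_eq_iff forall_2 sum_2)

lemma mat2_eqI: "a = a' \<Longrightarrow> b = b' \<Longrightarrow> c = c' \<Longrightarrow> d = d' \<Longrightarrow> mat2 a b c d = mat2 a' b' c' d'"
  by simp

lemma embs_mul: "embs k A ** embs m B = embs (k+m) (mmul A B)"
proof -
  obtain a b c d where A: "A = (a,b,c,d)" by (metis prod.exhaust)
  obtain e f g h where B: "B = (e,f,g,h)" by (metis prod.exhaust)
  show ?thesis unfolding A B
    by (simp add: mat2_mul emb_add emb_mul power_add add_divide_distrib)
qed

lemma embs_scal: "embs (k+m) (scal (4^k) A) = embs m A"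
proof -
  obtain a b c d where A: "A = (a,b,c,d)" by (metis prod.exhaust)
  show ?thesis unfolding A
    by (simp add: emb_sc power_add)
qed

definition Iz :: qmat where "Iz = ((1,0,0,0),(0,0,0,0),(0,0,0,0),(1,0,0,0))"
definition Sz :: qmat where "Sz = ((1,0,0,0),(0,0,0,0),(0,0,0,0),(-1,0,0,0))"
definition Tz :: qmat where "Tz = ((1,1,-1,1),(1,1,-1,1),(-1,1,-1,-1),(1,-1,1,1))"
definition Uz :: qmat where "Uz = ((1,1,-1,1),(-1,1,-1,-1),(1,1,-1,1),(1,-1,1,1))"

lemma mat2_1: "mat 1 = mat2 1 0 0 1"
  by (simp add: mat2_def mat_def vec_eq_iff forall_2)

lemma Iz: "embs 0 Iz = mat 1" unfolding mat2_1
  by (simp add: Iz_def) (intro mat2_eqI; simp add: complex_eq_iff)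
lemma Sz: "embs 0 Sz = s7"
  by (simp add: Sz_def s7_def) (intro mat2_eqI; simp add: complex_eq_iff)
lemma Tz: "embs 1 Tz = t7"
  by (simp add: Tz_def t7_def)
lemma Uz: "embs 1 Uz = u7" unfolding u7_def Tz[symmetric]
  by (simp add: Uz_def Tz_def transpose_def mat2_def vec_eq_iff forall_2)

declare embs.simps[simp del]

definition L2z :: "qmat list" where "L2z = [((1,(-1),1,1),((-1),(-1),1,(-1)),(1,(-1),1,1),(1,1,(-1),1)), ((1,(-1),1,1),(1,1,(-1),1),((-1),1,(-1),(-1)),(1,1,(-1),1)), ((1,1,(-1),1),((-1),1,(-1),(-1)),(1,1,(-1),1),(1,(-1),1,1)), ((1,1,(-1),1),(1,(-1),1,1),((-1),(-1),1,(-1)),(1,(-1),1,1))]"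

definition LSz :: "qmat list" where "LSz = [(((-4),0,0,0),(0,0,0,0),(0,0,0,0),(4,0,0,0)), ((0,0,0,0),((-4),0,0,0),((-4),0,0,0),(0,0,0,0)), ((0,0,0,0),(0,0,(-4),0),(0,0,4,0),(0,0,0,0)), ((0,0,0,0),(0,0,4,0),(0,0,(-4),0),(0,0,0,0)), ((0,0,0,0),(4,0,0,0),(4,0,0,0),(0,0,0,0)), ((4,0,0,0),(0,0,0,0),(0,0,0,0),((-4),0,0,0))]"

definition tblz :: "((qmat \<times> qmat) \<times> (nat list \<times> nat list)) list" where "tblz = [((((1,(-1),1,1),((-1),(-1),1,(-1)),(1,(-1),1,1),(1,1,(-1),1)),(((-4),0,0,0),(0,0,0,0),(0,0,0,0),(4,0,0,0))),([0, 0, 1, 2, 1, 2, 0, 2, 1],[0, 2, 0, 0, 2, 1])), ((((1,(-1),1,1),((-1),(-1),1,(-1)),(1,(-1),1,1),(1,1,(-1),1)),((0,0,0,0),((-4),0,0,0),((-4),0,0,0),(0,0,0,0))),([2, 0, 2, 0, 0, 2],[0, 0, 2, 1, 2, 0])), ((((1,(-1),1,1),((-1),(-1),1,(-1)),(1,(-1),1,1),(1,1,(-1),1)),((0,0,0,0),(0,0,(-4),0),(0,0,4,0),(0,0,0,0))),([2, 0, 0, 2, 0, 2],[2, 1, 2])), ((((1,(-1),1,1),((-1),(-1),1,(-1)),(1,(-1),1,1),(1,1,(-1),1)),((0,0,0,0),(0,0,4,0),(0,0,(-4),0),(0,0,0,0))),([0, 0, 2, 0],[2, 1, 2])), ((((1,(-1),1,1),((-1),(-1),1,(-1)),(1,(-1),1,1),(1,1,(-1),1)),((0,0,0,0),(4,0,0,0),(4,0,0,0),(0,0,0,0))),([0,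 2, 0, 0],[0, 0, 2, 1, 2, 0])), ((((1,(-1),1,1),((-1),(-1),1,(-1)),(1,(-1),1,1),(1,1,(-1),1)),((4,0,0,0),(0,0,0,0),(0,0,0,0),((-4),0,0,0))),([2],[0, 2, 0, 0, 2, 1])), ((((1,(-1),1,1),(1,1,(-1),1),((-1),1,(-1),(-1)),(1,1,(-1),1)),(((-4),0,0,0),(0,0,0,0),(0,0,0,0),(4,0,0,0))),([0, 0, 1, 0, 1, 2, 1],[0, 1, 0, 0])), ((((1,(-1),1,1),(1,1,(-1),1),((-1),1,(-1),(-1)),(1,1,(-1),1)),((0,0,0,0),((-4),0,0,0),((-4),0,0,0),(0,0,0,0))),([1, 1, 2, 1],[2, 1, 2])), ((((1,(-1),1,1),(1,1,(-1),1),((-1),1,(-1),(-1)),(1,1,(-1),1)),((0,0,0,0),(0,0,(-4),0),(0,0,4,0),(0,0,0,0))),([1, 2, 1, 1],[0, 1, 0, 0])), ((((1,(-1),1,1),(1,1,(-1),1),((-1),1,(-1),(-1)),(1,1,(-1),1)),((0,0,0,0),(0,0,4,0),(0,0,(-4),0),(0,0,0,0))),([0, 0, 2, 0],[0, 1, 0, 0])), ((((1,(-1),1,1),(1,1,(-1),1),((-1),1,(-1),(-1)),(1,1,(-1),1)),((0,0,0,0),(4,0,0,0),(4,0,0,0),(0,0,0,0))),([0, 2, 0, 0],[2, 1, 2])), ((((1,(-1),1,1),(1,1,(-1),1),((-1),1,(-1),(-1)),(1,1,(-1),1)),((4,0,0,0),(0,0,0,0),(0,0,0,0),((-4),0,0,0))),([2],[0,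 1, 0, 0])), ((((1,1,(-1),1),((-1),1,(-1),(-1)),(1,1,(-1),1),(1,(-1),1,1)),(((-4),0,0,0),(0,0,0,0),(0,0,0,0),(4,0,0,0))),([0, 0, 1, 1, 2, 1, 0],[1])), ((((1,1,(-1),1),((-1),1,(-1),(-1)),(1,1,(-1),1),(1,(-1),1,1)),((0,0,0,0),((-4),0,0,0),((-4),0,0,0),(0,0,0,0))),([2, 0, 2, 0, 0, 2],[1])), ((((1,1,(-1),1),((-1),1,(-1),(-1)),(1,1,(-1),1),(1,(-1),1,1)),((0,0,0,0),(0,0,(-4),0),(0,0,4,0),(0,0,0,0))),([1, 2, 1, 1],[1])), ((((1,1,(-1),1),((-1),1,(-1),(-1)),(1,1,(-1),1),(1,(-1),1,1)),((0,0,0,0),(0,0,4,0),(0,0,(-4),0),(0,0,0,0))),([0, 0, 2, 0],[1])), ((((1,1,(-1),1),((-1),1,(-1),(-1)),(1,1,(-1),1),(1,(-1),1,1)),((0,0,0,0),(4,0,0,0),(4,0,0,0),(0,0,0,0))),([0, 2, 0, 0],[1])), ((((1,1,(-1),1),((-1),1,(-1),(-1)),(1,1,(-1),1),(1,(-1),1,1)),((4,0,0,0),(0,0,0,0),(0,0,0,0),((-4),0,0,0))),([2],[1])), ((((1,1,(-1),1),(1,(-1),1,1),((-1),(-1),1,(-1)),(1,(-1),1,1)),(((-4),0,0,0),(0,0,0,0),(0,0,0,0),(4,0,0,0))),([0, 1, 0, 0, 1, 2, 1],[2, 1, 2])), ((((1,1,(-1),1),(1,(-1),1,1),((-1),(-1),1,(-1)),(1,(-1),1,1)),((0,0,0,0),((-4),0,0,0),((-4),0,0,0),(0,0,0,0))),([1,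 1, 2, 1],[0, 0, 1, 0])), ((((1,1,(-1),1),(1,(-1),1,1),((-1),(-1),1,(-1)),(1,(-1),1,1)),((0,0,0,0),(0,0,(-4),0),(0,0,4,0),(0,0,0,0))),([2, 0, 0, 2, 0, 2],[0, 0, 1, 0])), ((((1,1,(-1),1),(1,(-1),1,1),((-1),(-1),1,(-1)),(1,(-1),1,1)),((0,0,0,0),(0,0,4,0),(0,0,(-4),0),(0,0,0,0))),([0, 0, 2, 0],[0, 0, 1, 0])), ((((1,1,(-1),1),(1,(-1),1,1),((-1),(-1),1,(-1)),(1,(-1),1,1)),((0,0,0,0),(4,0,0,0),(4,0,0,0),(0,0,0,0))),([0, 2, 0, 0],[0, 0, 1, 0])), ((((1,1,(-1),1),(1,(-1),1,1),((-1),(-1),1,(-1)),(1,(-1),1,1)),((4,0,0,0),(0,0,0,0),(0,0,0,0),((-4),0,0,0))),([2],[2, 1, 2]))]"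

definition wordval :: "qmat list \<Rightarrow> nat list \<Rightarrow> qmat" where
  "wordval gs w = foldr (\<lambda>k acc. mmul (gs!k) acc) w Iz"

definition tblcheck :: bool where
  "tblcheck = list_all (\<lambda>r2. list_all (\<lambda>sp. case map_of tblz (r2,sp) of None \<Rightarrow> False
      | Some (w1,w2) \<Rightarrow> list_all (\<lambda>k. k < 3) w1 \<and> list_all (\<lambda>k. k < 3) w2 \<and> w2 \<noteq> []
          \<and> wordval [Tz,r2,sp] w1 = scal (4^length w1) Sz
          \<and> wordval [Tz,r2,sp] w2 = scal (4^(length w2 - 1)) Uz) LSz) L2z"

definition invcheck :: "qmat list \<Rightarrow> bool" where
  "invcheck L = list_all (\<lambda>(g,gi,k). list_all (\<lambda>l. mmul (mmul g l) gi \<in> set (map (scal (4^k)) L)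
        \<and> mmul (mmul gi l) g \<in> set (map (scal (4^k)) L)) L)
     [(Sz,Sz,0),(Tz,mmul Tz Tz,3),(Uz,mmul Uz Uz,3)]"

lemma tblcheck: tblcheck by code_simp
lemma invcheck2: "invcheck L2z" by code_simp
lemma invcheckS: "invcheck LSz" by code_simp
lemma invfacts: "mmul Sz Sz = Iz" "mmul Tz (mmul Tz Tz) = scal (4^3) Iz" "mmul (mmul Tz Tz) Tz = scal (4^3) Iz"
  "mmul Uz (mmul Uz Uz) = scal (4^3) Iz" "mmul (mmul Uz Uz) Uz = scal (4^3) Iz" by code_simp+
lemma memfacts: "Uz \<in> set L2z" "scal (4^1) Sz \<in> set LSz" by code_simp+

lemma tbl_ex:
  assumes "q2 \<in> set L2z" "qs \<in> set LSz"
  shows "\<exists>w1 w2. (\<forall>k\<in>set w1. k < 3) \<and> (\<forall>k\<in>set w2. k < 3) \<and> w2 \<noteq> []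
          \<and> wordval [Tz,q2,qs] w1 = scal (4^length w1) Sz
          \<and> wordval [Tz,q2,qs] w2 = scal (4^(length w2 - 1)) Uz"
proof -
  have "case map_of tblz (q2,qs) of None \<Rightarrow> False
      | Some (w1,w2) \<Rightarrow> list_all (\<lambda>k. k < 3) w1 \<and> list_all (\<lambda>k. k < 3) w2 \<and> w2 \<noteq> []
          \<and> wordval [Tz,q2,qs] w1 = scal (4^length w1) Sz
          \<and> wordval [Tz,q2,qs] w2 = scal (4^(length w2 - 1)) Uz"
    using tblcheck assms unfolding tblcheck_def list_all_iff by blast
  then show ?thesis by (auto split: option.splits simp: list_all_iff)
qed

lemma s7_word: "embs (length w) (scal (4^length w) Sz) = s7"
  using embs_scal[of "length w" 0 Sz] Sz by simp

lemma u7_word: "w \<noteq> [] \<Longrightarrow> embs (length w) (scal (4^(length w - 1)) Uz) = u7"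
  using embs_scal[of "length w - 1" 1 Uz] Uz by simp

definition closedg :: "cmat2 set \<Rightarrow> bool" where
  "closedg H \<longleftrightarrow> mat 1 \<in> H \<and> (\<forall>a\<in>H. \<forall>b\<in>H. a ** b \<in> H)
     \<and> (\<forall>a\<in>H. \<exists>b\<in>H. a ** b = mat 1 \<and> b ** a = mat 1)"

definition Inv :: "cmat2 set" where
  "Inv = {a. \<exists>b. a ** b = mat 1 \<and> b ** a = mat 1}"

lemma inv_unique: "b ** a = mat 1 \<Longrightarrow> a ** c = mat 1 \<Longrightarrow> b = (c::cmat2)"
proof -
  assume 1: "b ** a = mat 1" and 2: "a ** c = mat 1"
  have "b = b ** (a ** c)" using 2 by simp
  also have "\<dots> = (b ** a) ** c" by (rule matrix_mul_assoc)
  also have "\<dots> = c" using 1 by simp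
  finally show ?thesis .
qed

lemma prod_inv:
  fixes a b a' b' :: cmat2
  assumes "a ** a' = mat 1" "b ** b' = mat 1"
  shows "(a ** b) ** (b' ** a') = mat 1"
proof -
  have "(a ** b) ** (b' ** a') = a ** ((b ** b') ** a')" by (simp add: matrix_mul_assoc)
  also have "\<dots> = mat 1" using assms by simp
  finally show ?thesis .
qed

lemma InvI: "a ** b = mat 1 \<Longrightarrow> b ** a = mat 1 \<Longrightarrow> a \<in> Inv"
  unfolding Inv_def by blast

lemma InvE: "a \<in> Inv \<Longrightarrow> (\<And>b. a ** b = mat 1 \<Longrightarrow> b ** a = mat 1 \<Longrightarrow> P) \<Longrightarrow> P"
  unfolding Inv_def by blast

lemma closed_Inv: "closedg Inv"
  unfolding closedg_def
proof (intro conjI ballI)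
  show "mat 1 \<in> Inv" by (rule InvI[of _ "mat 1"]) simp_all
next
  fix a b :: cmat2
  assume a: "a \<in> Inv" and b: "b \<in> Inv"
  obtain a' where a': "a ** a' = mat 1" "a' ** a = mat 1" using a by (rule InvE)
  obtain b' where b': "b ** b' = mat 1" "b' ** b = mat 1" using b by (rule InvE)
  have "(a ** b) ** (b' ** a') = mat 1" by (rule prod_inv[OF a'(1) b'(1)])
  moreover have "(b' ** a') ** (a ** b) = mat 1" by (rule prod_inv[OF b'(2) a'(2)])
  ultimately show "a ** b \<in> Inv" by (rule InvI)
next
  fix a :: cmat2
  assume a: "a \<in> Inv"
  obtain a' where a': "a ** a' = mat 1" "a' ** a = mat 1" using a by (rule InvE)
  have "a' \<in> Inv" using a' by (intro InvI[of _ a]) 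
  with a' show "\<exists>b\<in>Inv. a ** b = mat 1 \<and> b ** a = mat 1" by blast
qed

lemma gg_least: "Y \<subseteq> H \<Longrightarrow> closedg H \<Longrightarrow> gen_group Y \<subseteq> H"
  unfolding gen_group_def closedg_def by blast

lemma gg_base: "Y \<subseteq> gen_group Y"
  unfolding gen_group_def by blast

lemma gen_group_alt: "gen_group Y = \<Inter>{H. Y \<subseteq> H \<and> closedg H}"
  unfolding gen_group_def closedg_def by (simp add: conj_assoc)

lemma gg_mem: "x \<in> gen_group Y \<longleftrightarrow> (\<forall>H. Y \<subseteq> H \<longrightarrow> closedg H \<longrightarrow> x \<in> H)"
  unfolding gen_group_alt by blast

lemma gg_closed:
  assumes Y: "Y \<subseteq> Inv"
  shows "closedg (gen_group Y)"
  unfolding closedg_def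
proof (intro conjI ballI)
  show "mat 1 \<in> gen_group Y" unfolding gg_mem closedg_def by blast
next
  fix a b assume a: "a \<in> gen_group Y" and b: "b \<in> gen_group Y"
  show "a ** b \<in> gen_group Y" unfolding gg_mem
  proof (intro allI impI)
    fix H assume H: "Y \<subseteq> H" "closedg H"
    with a b have "a \<in> H" "b \<in> H" unfolding gg_mem by blast+
    with H(2) show "a ** b \<in> H" unfolding closedg_def by blast
  qed
next
  fix a assume a: "a \<in> gen_group Y"
  have "a \<in> Inv" using a Y closed_Inv unfolding gg_mem by blast
  then obtain b where b: "a ** b = mat 1" "b ** a = mat 1" by (rule InvE)
  have "b \<in> gen_group Y" unfolding gg_mem
  proof (intro allI impI)
    fix H assume H: "Y \<subseteq> H" "closedg H"
    with a have "a \<in> H" unfolding gg_mem by blast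
    with H(2) obtain c where c: "c \<in> H" "a ** c = mat 1" unfolding closedg_def by blast
    from inv_unique[OF b(2) c(2)] c(1) show "b \<in> H" by simp
  qed
  with b show "\<exists>b\<in>gen_group Y. a ** b = mat 1 \<and> b ** a = mat 1" by blast
qed

lemma conj_mul:
  fixes g h a b :: cmat2
  assumes "h ** g = mat 1"
  shows "g ** (a ** b) ** h = (g ** a ** h) ** (g ** b ** h)"
proof -
  have "(g ** a ** h) ** (g ** b ** h) = g ** a ** (h ** g) ** b ** h" by (simp add: matrix_mul_assoc)
  also have "\<dots> = g ** (a ** b) ** h" using assms by (simp add: matrix_mul_assoc)
  finally show ?thesis by simp
qed

lemma conj_back:
  fixes g h y :: cmat2
  assumes "g ** h = mat 1"
  shows "g ** (h ** y ** g) ** h = y"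
proof -
  have "g ** (h ** y ** g) ** h = (g ** h) ** y ** (g ** h)" by (simp add: matrix_mul_assoc)
  also have "\<dots> = y" using assms by simp
  finally show ?thesis .
qed

lemma conj_one:
  fixes g h x :: cmat2
  assumes "h ** g = mat 1" "g ** x ** h = mat 1"
  shows "x = mat 1"
proof -
  have "h ** (g ** x ** h) ** g = (h ** g) ** x ** (h ** g)" by (simp add: matrix_mul_assoc)
  also have "\<dots> = x" using assms by simp
  finally show ?thesis using assms by (simp add: matrix_mul_assoc)
qed

lemma closed_conj:
  assumes H: "closedg H" and gh: "g ** h = mat 1" "h ** g = mat 1"
  shows "closedg {x. g ** x ** h \<in> H}"
  unfolding closedg_def
proof (intro conjI ballI)
  have "g ** mat 1 ** h = mat 1" using gh by simp
  then show "mat 1 \<in> {x. g ** x ** h \<in> H}" using H unfolding closedg_def by simp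
next
  fix a b assume a: "a \<in> {x. g ** x ** h \<in> H}" and b: "b \<in> {x. g ** x ** h \<in> H}"
  from a b H have "(g ** a ** h) ** (g ** b ** h) \<in> H" unfolding closedg_def by blast
  then show "a ** b \<in> {x. g ** x ** h \<in> H}" using conj_mul[OF gh(2)] by simp
next
  fix a assume a: "a \<in> {x. g ** x ** h \<in> H}"
  then have "g ** a ** h \<in> H" by simp
  then obtain z where z: "z \<in> H" "(g ** a ** h) ** z = mat 1" "z ** (g ** a ** h) = mat 1"
    using H unfolding closedg_def by blast
  let ?b = "h ** z ** g"
  have e1: "g ** ?b ** h = z" by (rule conj_back[OF gh(1)])
  have "g ** (a ** ?b) ** h = (g ** a ** h) ** (g ** ?b ** h)" by (rule conj_mul[OF gh(2)])
  then have "g ** (a ** ?b) ** h = mat 1" using e1 z(2) by simp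
  then have e2: "a ** ?b = mat 1" by (rule conj_one[OF gh(2)])
  have "g ** (?b ** a) ** h = (g ** ?b ** h) ** (g ** a ** h)" by (rule conj_mul[OF gh(2)])
  then have "g ** (?b ** a) ** h = mat 1" using e1 z(3) by simp
  then have e3: "?b ** a = mat 1" by (rule conj_one[OF gh(2)])
  have "?b \<in> {x. g ** x ** h \<in> H}" using e1 z(1) by simp
  with e2 e3 show "\<exists>b\<in>{x. g ** x ** h \<in> H}. a ** b = mat 1 \<and> b ** a = mat 1" by blast
qed

lemma closed_word:
  assumes H: "closedg H" and w: "\<forall>k\<in>set w. k < length gs \<and> embs 1 (gs!k) \<in> H"
  shows "embs (length w) (wordval gs w) \<in> H"
  using w
proof (induction w)
  case Nil then show ?case using H Iz by (simp add: wordval_def closedg_def)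
next
  case (Cons k w)
  then have "embs 1 (gs!k) \<in> H" "embs (length w) (wordval gs w) \<in> H" by auto
  moreover have "embs (length (k # w)) (wordval gs (k # w)) = embs 1 (gs!k) ** embs (length w) (wordval gs w)"
    by (simp add: wordval_def embs_mul del: embs.simps)
  ultimately show ?case using H unfolding closedg_def by simp
qed

lemma embs_12: "embs 1 A ** embs 2 B = embs 3 (mmul A B)"
  using embs_mul[of 1 A 2 B] by (simp add: numeral_3_eq_3)

lemma embs_21: "embs 2 A ** embs 1 B = embs 3 (mmul A B)"
  using embs_mul[of 2 A 1 B] by (simp add: numeral_3_eq_3)

lemma embs_Iz3: "embs 3 (scal (4^3) Iz) = mat 1"
  using embs_scal[of 3 0 Iz] Iz by simp

lemma s7_inv: "s7 ** s7 = mat 1"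
  using embs_mul[of 0 Sz 0 Sz] Sz Iz invfacts(1) by simp

lemma t7_inv: "t7 ** embs 2 (mmul Tz Tz) = mat 1" "embs 2 (mmul Tz Tz) ** t7 = mat 1"
  unfolding Tz[symmetric] embs_12 embs_21 invfacts embs_Iz3 by simp_all

lemma u7_inv: "u7 ** embs 2 (mmul Uz Uz) = mat 1" "embs 2 (mmul Uz Uz) ** u7 = mat 1"
  unfolding Uz[symmetric] embs_12 embs_21 invfacts embs_Iz3 by simp_all

lemma stu_Inv: "s7 \<in> Inv" "t7 \<in> Inv" "u7 \<in> Inv"
  using s7_inv t7_inv u7_inv by (auto intro: InvI)

lemma G7_closed: "closedg G7"
proof -
  have "{s7, t7, u7} \<subseteq> Inv" using stu_Inv by simp
  then show ?thesis unfolding G7_def by (rule gg_closed)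
qed

lemma G7_Inv: "G7 \<subseteq> Inv"
proof -
  have "{s7, t7, u7} \<subseteq> Inv" using stu_Inv by simp
  then show ?thesis unfolding G7_def using closed_Inv by (rule gg_least)
qed

lemma G7_least: "closedg H \<Longrightarrow> s7 \<in> H \<Longrightarrow> t7 \<in> H \<Longrightarrow> u7 \<in> H \<Longrightarrow> G7 \<subseteq> H"
proof -
  assume H: "closedg H" "s7 \<in> H" "t7 \<in> H" "u7 \<in> H"
  then have "{s7, t7, u7} \<subseteq> H" by simp
  then show ?thesis unfolding G7_def using H(1) by (rule gg_least)
qed

lemma stu_G7: "s7 \<in> G7" "t7 \<in> G7" "u7 \<in> G7"
proof -
  have "{s7, t7, u7} \<subseteq> G7" unfolding G7_def by (rule gg_base)
  then show "s7 \<in> G7" "t7 \<in> G7" "u7 \<in> G7" by simp_all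
qed

lemma G7_inv_comm: "g \<in> G7 \<Longrightarrow> g ** h = mat 1 \<Longrightarrow> h ** g = mat 1"
proof -
  assume g: "g \<in> G7" and gh: "g ** h = mat 1"
  then obtain g' where "g ** g' = mat 1" "g' ** g = mat 1" using G7_Inv unfolding Inv_def by blast
  with inv_unique[OF this(2) gh] show ?thesis by simp
qed

definition KL :: "qmat list \<Rightarrow> cmat2 set" where
  "KL L = {g. \<exists>g'. g ** g' = mat 1 \<and> g' ** g = mat 1 \<and>
      (\<forall>l\<in>embs 1 ` set L. g ** l ** g' \<in> embs 1 ` set L \<and> g' ** l ** g \<in> embs 1 ` set L)}"

lemma closed_KL: "closedg (KL L)"
  unfolding closedg_def
proof (intro conjI ballI)
  show "mat 1 \<in> KL L" unfolding KL_def by (intro CollectI exI[of _ "mat 1"]) simp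
next
  fix a b assume a: "a \<in> KL L" and b: "b \<in> KL L"
  from a obtain a' where a': "a ** a' = mat 1" "a' ** a = mat 1"
    "\<forall>l\<in>embs 1 ` set L. a ** l ** a' \<in> embs 1 ` set L \<and> a' ** l ** a \<in> embs 1 ` set L"
    unfolding KL_def by blast
  from b obtain b' where b': "b ** b' = mat 1" "b' ** b = mat 1"
    "\<forall>l\<in>embs 1 ` set L. b ** l ** b' \<in> embs 1 ` set L \<and> b' ** l ** b \<in> embs 1 ` set L"
    unfolding KL_def by blast
  have "(a ** b) ** (b' ** a') = mat 1" "(b' ** a') ** (a ** b) = mat 1"
    using a' b' prod_inv by blast+
  moreover have "a ** b ** l ** (b' ** a') = a ** (b ** l ** b') ** a'" for l
    by (simp add: matrix_mul_assoc)
  moreover have "b' ** a' ** l ** (a ** b) = b' ** (a' ** l ** a) ** b" for l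
    by (simp add: matrix_mul_assoc)
  ultimately show "a ** b \<in> KL L" unfolding KL_def using a'(3) b'(3)
    by (intro CollectI exI[of _ "b' ** a'"]) auto
next
  fix a assume a: "a \<in> KL L"
  from a obtain a' where a': "a ** a' = mat 1" "a' ** a = mat 1"
    "\<forall>l\<in>embs 1 ` set L. a ** l ** a' \<in> embs 1 ` set L \<and> a' ** l ** a \<in> embs 1 ` set L"
    unfolding KL_def by blast
  then have "a' \<in> KL L" unfolding KL_def by (intro CollectI exI[of _ a]) auto
  with a' show "\<exists>b\<in>KL L. a ** b = mat 1 \<and> b ** a = mat 1" by blast
qed

lemma gen_in_KL:
  assumes "invcheck L"
  shows "s7 \<in> KL L" "t7 \<in> KL L" "u7 \<in> KL L"
proof -
  have c: "\<forall>l\<in>set L. mmul (mmul g l) gi \<in> set (map (scal (4^k)) L) \<and> mmul (mmul gi l) g \<in> set (map (scal (4^k)) L)"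
    if "(g,gi,k) \<in> set [(Sz,Sz,0),(Tz,mmul Tz Tz,3),(Uz,mmul Uz Uz,3)]" for g gi k
    using assms that unfolding invcheck_def list_all_iff by fastforce
  have gen: "embs m g \<in> KL L"
    if gg: "(g,gi,k) \<in> set [(Sz,Sz,0),(Tz,mmul Tz Tz,3),(Uz,mmul Uz Uz,3)]"
    and inv: "embs m g ** embs n gi = mat 1" "embs n gi ** embs m g = mat 1" and k: "k = m + n"
    for g gi k m n
  proof -
    have "embs m g ** l ** embs n gi \<in> embs 1 ` set L \<and> embs n gi ** l ** embs m g \<in> embs 1 ` set L"
      if l: "l \<in> embs 1 ` set L" for l
    proof -
      from l obtain q where q: "q \<in> set L" "l = embs 1 q" by blast
      from c[OF gg] q(1) obtain q1 q2 where
        q12: "q1 \<in> set L" "mmul (mmul g q) gi = scal (4^k) q1"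
             "q2 \<in> set L" "mmul (mmul gi q) g = scal (4^k) q2" by auto
      have "embs m g ** l ** embs n gi = embs (k + 1) (mmul (mmul g q) gi)"
        unfolding q(2) embs_mul k by (simp add: ac_simps del: embs.simps)
      also have "\<dots> = embs 1 q1" unfolding q12(2) by (rule embs_scal)
      finally have 1: "embs m g ** l ** embs n gi \<in> embs 1 ` set L" using q12(1) by blast
      have "embs n gi ** l ** embs m g = embs (k + 1) (mmul (mmul gi q) g)"
        unfolding q(2) embs_mul k by (simp add: ac_simps del: embs.simps)
      also have "\<dots> = embs 1 q2" unfolding q12(4) by (rule embs_scal)
      finally have 2: "embs n gi ** l ** embs m g \<in> embs 1 ` set L" using q12(3) by blast
      from 1 2 show ?thesis by blast
    qed
    with inv show ?thesis unfolding KL_def by blast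
  qed
  show "s7 \<in> KL L" using gen[of Sz Sz 0 0 0] Sz s7_inv by simp
  show "t7 \<in> KL L" using gen[of Tz "mmul Tz Tz" 3 1 2] Tz t7_inv by simp
  show "u7 \<in> KL L" using gen[of Uz "mmul Uz Uz" 3 1 2] Uz u7_inv by simp
qed

lemma G7_KL: "invcheck L \<Longrightarrow> G7 \<subseteq> KL L"
proof -
  assume c: "invcheck L"
  show ?thesis using gen_in_KL[OF c] closed_KL[of L] by (intro G7_least)
qed

lemma conj_in:
  assumes "invcheck L" "g \<in> G7" "g ** h = mat 1" "l \<in> embs 1 ` set L"
  shows "g ** l ** h \<in> embs 1 ` set L"
proof -
  have "g \<in> KL L" using G7_KL[OF assms(1)] assms(2) by (rule subsetD)
  then obtain g' where g': "g ** g' = mat 1" "g' ** g = mat 1"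
    "\<forall>l\<in>embs 1 ` set L. g ** l ** g' \<in> embs 1 ` set L \<and> g' ** l ** g \<in> embs 1 ` set L"
    unfolding KL_def by (rule CollectE) (elim exE conjE, rule that)
  have "g' = h" by (rule inv_unique[OF g'(2) assms(3)])
  with g'(3) assms(4) show ?thesis by blast
qed

lemma class_sub:
  assumes c: "invcheck L" and x: "x \<in> embs 1 ` set L"
  shows "conj_class7 x \<subseteq> embs 1 ` set L"
proof
  fix y assume "y \<in> conj_class7 x"
  then obtain g h where gh: "y = g ** x ** h" "g \<in> G7" "g ** h = mat 1"
    unfolding conj_class7_def by auto
  show "y \<in> embs 1 ` set L" unfolding gh(1) by (rule conj_in[OF c gh(2) gh(3) x])
qed

lemma R2_sub: "R2 \<subseteq> embs 1 ` set L2z"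
proof -
  have "u7 \<in> embs 1 ` set L2z" using memfacts(1) Uz by (metis image_eqI)
  then show ?thesis unfolding R2_def by (rule class_sub[OF invcheck2])
qed

lemma S7_sub: "S7 \<subseteq> embs 1 ` set LSz"
proof -
  have "embs 1 (scal (4^1) Sz) = s7" using embs_scal[of 1 0 Sz] Sz by simp
  then have "s7 \<in> embs 1 ` set LSz" using memfacts(2) by (metis image_eqI)
  then show ?thesis unfolding S7_def by (rule class_sub[OF invcheckS])
qed

lemma get_from_inv:
  assumes H: "closedg H" and x: "x \<in> H" and r: "r ** x = mat 1"
  shows "r \<in> H"
proof -
  from H x obtain b where "b \<in> H" "x ** b = mat 1" unfolding closedg_def by blast
  with inv_unique[OF r this(2)] show ?thesis by simp
qed

theorem proposition3p15:
  fixes X :: "cmat2 set"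
  assumes "X \<subseteq> reflections7"
    and "X \<inter> (R1 \<union> inv_set R1) \<noteq> {}"
    and "X \<inter> (R2 \<union> inv_set R2) \<noteq> {}"
    and "X \<inter> S7 \<noteq> {}"
  shows "gen_group X = G7"
proof
  have XG: "X \<subseteq> G7" using assms(1) unfolding reflections7_def by blast
  then show "gen_group X \<subseteq> G7" using G7_closed by (rule gg_least)
  let ?H = "gen_group X"
  have Hc: "closedg ?H" using XG G7_Inv by (intro gg_closed) auto
  have XH: "X \<subseteq> ?H" by (rule gg_base)
  have HG: "?H \<subseteq> G7" using XG G7_closed by (rule gg_least)
  obtain r1 where r1: "r1 \<in> R1" "r1 \<in> ?H"
  proof -
    from assms(2) obtain x where x: "x \<in> X" "x \<in> R1 \<union> inv_set R1" by blast
    show ?thesis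
    proof (cases "x \<in> R1")
      case True with x XH that show ?thesis by blast
    next
      case False
      with x obtain r where "r \<in> R1" "r ** x = mat 1" unfolding inv_set_def by blast
      with get_from_inv[OF Hc _ this(2)] x XH that show ?thesis by blast
    qed
  qed
  obtain r2 where r2: "r2 \<in> R2" "r2 \<in> ?H"
  proof -
    from assms(3) obtain x where x: "x \<in> X" "x \<in> R2 \<union> inv_set R2" by blast
    show ?thesis
    proof (cases "x \<in> R2")
      case True with x XH that show ?thesis by blast
    next
      case False
      with x obtain r where "r \<in> R2" "r ** x = mat 1" unfolding inv_set_def by blast
      with get_from_inv[OF Hc _ this(2)] x XH that show ?thesis by blast
    qed
  qed
  obtain sp where sp: "sp \<in> S7" "sp \<in> ?H" using assms(4) XH by blast
  from r1(1) obtain g h where gh: "g \<in> G7" "h \<in> G7" "g ** h = mat 1" "r1 = g ** t7 ** h"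
    unfolding R1_def conj_class7_def by blast
  have hg: "h ** g = mat 1" using G7_inv_comm[OF gh(1,3)] .
  let ?r2' = "h ** r2 ** g" and ?sp' = "h ** sp ** g"
  have r2L: "?r2' \<in> embs 1 ` set L2z"
    using conj_in[OF invcheck2 gh(2) hg] R2_sub r2(1) by blast
  have spL: "?sp' \<in> embs 1 ` set LSz"
    using conj_in[OF invcheckS gh(2) hg] S7_sub sp(1) by blast
  let ?H' = "{x. g ** x ** h \<in> ?H}"
  have H'c: "closedg ?H'" using closed_conj[OF Hc gh(3) hg] .
  have bk: "g ** (h ** y ** g) ** h = y" for y
    by (rule conj_back[OF gh(3)])
  have tH': "t7 \<in> ?H'" using gh(4) r1(2) by simp
  have r2H': "?r2' \<in> ?H'" using bk r2(2) by simp
  have spH': "?sp' \<in> ?H'" using bk sp(2) by simp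
  from r2L obtain q2 where q2: "q2 \<in> set L2z" "?r2' = embs 1 q2" by blast
  from spL obtain qs where qs: "qs \<in> set LSz" "?sp' = embs 1 qs" by blast
  from tbl_ex[OF q2(1) qs(1)] obtain w1 w2 where
    w: "\<forall>k\<in>set w1. k < 3" "\<forall>k\<in>set w2. k < 3" "w2 \<noteq> []"
       "wordval [Tz,q2,qs] w1 = scal (4^length w1) Sz"
       "wordval [Tz,q2,qs] w2 = scal (4^(length w2 - 1)) Uz" by blast
  have gens: "k < length [Tz,q2,qs] \<and> embs 1 ([Tz,q2,qs]!k) \<in> ?H'" if "k < 3" for k
  proof -
    have "k = 0 \<or> k = 1 \<or> k = 2" using that by auto
    then show ?thesis using tH' r2H' spH' q2(2) qs(2) Tz by (auto simp del: embs.simps)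
  qed
  have "embs (length w1) (wordval [Tz,q2,qs] w1) \<in> ?H'"
    using w(1) gens by (intro closed_word[OF H'c]) auto
  then have sH': "s7 \<in> ?H'" using w(4) s7_word[of w1] by (simp del: embs.simps)
  have "embs (length w2) (wordval [Tz,q2,qs] w2) \<in> ?H'"
    using w(2) gens by (intro closed_word[OF H'c]) auto
  then have uH': "u7 \<in> ?H'" using w(5) u7_word[OF w(3)] by (simp del: embs.simps)
  have G7H': "G7 \<subseteq> ?H'" using G7_least[OF H'c sH' tH' uH'] .
  show "G7 \<subseteq> ?H"
  proof
    fix y assume y: "y \<in> G7"
    have "h ** y ** g \<in> G7" using G7_closed gh(1,2) y unfolding closedg_def by blast
    with G7H' have "g ** (h ** y ** g) ** h \<in> ?H" by blast
    then show "y \<in> ?H" using bk by simp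
  qed
qed

end
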